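(* Assume hypotheses (A) and (B) and suppose the routing matrix $P$ has a branching structure, i.e. for every $i\in\{1,\dots,d\}$ the set $\{j\in\{1,\dots,d\}:p_{ji}>0\}$ has at most one element. Then for every $\varepsilon>0$ and every $\rho=(\rho_1,\dots,\rho_d)$ with $(\rho P)_i<\rho_i$ for all $i$, the vector $\gamma$ with $\gamma_i=\varepsilon G_{ii}/\rho_i$ ($i=1,\dots,d$) belongs to $\Gamma$.
   Context: Jackson network with $d$ queues: arrival rates $\lambda_i\ge0$, service rates $\mu_i>0$, routing matrix $P=(p_{ij})_{i,j=1}^d$ nonnegative with $p_{ii}=0$, $\sum_jp_{ij}\le1$, $p_{i0}=1-\sum_jp_{ij}$. Hypothesis (A): the jump-rate kernel on $\mathbb{Z}^d$ (jumps $+\epsilon^i$ at rate $\lambda_i$, $-\epsilon^i$ at rate $\mu_ip_{i0}$, $\epsilon^j-\epsilon^i$ at rate $\mu_ip_{ij}$) is irreducible, equivalently spectral radius of $P$ $<1$ and for every $i$ there are $n,j$ with $\lambda_jp^{(n)}_{ji}>0$; the traffic equations $\nu_j=\lambda_j+\sum_i\nu_ip_{ij}$ then have a unique solution with $\nu_i>0$. Hypothesis (B): $\nu_i<\mu_i$ for all $i$. $G=(I-P)^{-1}$, $(\rho P)_i=\sum_j\rho_jp_{ji}$. $Q_{ij}$: probability that the chain on $\{0,\dots,d\}$ with transitions $p_{ij}$ ($0$ absorbing) started at $i$ ever visits $j$ (time $0$ included). For $\gamma\in\mathbb{R}_+^d$, $\overrightarrow{\gamma_i}$ has components $\gamma_i^j=\log(1+Q_{ji}\gamma_i)$;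 $\Gamma$ is the set of $\gamma\in\mathbb{R}_+^d$ such that for every $i$ and nonzero $v\in\mathbb{R}_+^d$ with $v^i=0$, $\overrightarrow{\gamma_i}\cdot v<\max_j\overrightarrow{\gamma_j}\cdot v$. *)

theory Defs
  imports "HOL-Analysis.Analysis"
begin

text \<open>Queues are indexed by a finite type 'n (playing the role of {1..d}).
  The routing matrix is P :: real^'n^'n with P$i$j = p_ij.\<close>

definition exit_prob :: "real^'n^'n \<Rightarrow> 'n::finite \<Rightarrow> real" where
  "exit_prob P i = 1 - (\<Sum>j\<in>UNIV. P$i$j)"

definition unit_int :: "'n::finite \<Rightarrow> int^'n" where
  "unit_int i = (\<chi> k. if k = i then 1 else 0)"

text \<open>One-step relation of the jump-rate kernel on Z^d: jumps with positive rate.\<close>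
definition jackson_step :: "real^'n \<Rightarrow> real^'n \<Rightarrow> real^'n^'n \<Rightarrow> ((int^'n) \<times> (int^'n)) set" where
  "jackson_step lam mu P = {(x, y). \<exists>i::'n::finite.
       (y = x + unit_int i \<and> lam$i > 0)
     \<or> (y = x - unit_int i \<and> mu$i * exit_prob P i > 0)
     \<or> (\<exists>j. y = x + unit_int j - unit_int i \<and> mu$i * P$i$j > 0)}"

definition kernel_irreducible :: "real^'n \<Rightarrow> real^'n \<Rightarrow> real^'n^'n::finite \<Rightarrow> bool" where
  "kernel_irreducible lam mu P \<longleftrightarrow> (\<forall>x y. (x, y) \<in> (jackson_step lam mu P)\<^sup>*)"

fun path_prob :: "real^'n^'n \<Rightarrow> 'n list \<Rightarrow> real" where
  "path_prob P (a # b # xs) = P$a$b * path_prob P (b # xs)"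
| "path_prob P _ = 1"

text \<open>Q i j: probability that the chain on {0,...,d} (0 absorbing) started at i ever visits j
  (time 0 included): sum over first-passage paths i, k_1, ..., k_m, j with k_l \<noteq> j.
  Paths through the absorbing state 0 never reach j, so only states in 'n occur.\<close>
definition visit_prob :: "real^'n^'n \<Rightarrow> 'n::finite \<Rightarrow> 'n \<Rightarrow> real" where
  "visit_prob P i j = (if i = j then 1 else
     (\<Sum>m. \<Sum>xs\<in>{xs. length xs = m \<and> set xs \<subseteq> UNIV - {j}}. path_prob P (i # xs @ [j])))"

definition green :: "real^'n^'n \<Rightarrow> real^'n^'n::finite" where
  "green P = matrix_inv (mat 1 - P)"

definition gamma_arrow :: "real^'n^'n \<Rightarrow> real^'n \<Rightarrow> 'n::finite \<Rightarrow> real^'n" where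
  "gamma_arrow P \<gamma> i = (\<chi> j. ln (1 + visit_prob P j i * \<gamma>$i))"

definition Gamma_set :: "real^'n^'n::finite \<Rightarrow> (real^'n) set" where
  "Gamma_set P = {\<gamma>. (\<forall>i. \<gamma>$i \<ge> 0) \<and>
     (\<forall>i v. (\<forall>k. v$k \<ge> 0) \<longrightarrow> v \<noteq> 0 \<longrightarrow> v$i = 0 \<longrightarrow>
        gamma_arrow P \<gamma> i \<bullet> v < (MAX j. gamma_arrow P \<gamma> j \<bullet> v))}"

end

theory Submission
  imports Defs
begin

definition Sx :: "real^'n^'n \<Rightarrow> nat \<Rightarrow> 'n::finite \<Rightarrow> 'n \<Rightarrow> real" where
  "Sx P m k i = (\<Sum>xs\<in>{xs. length xs = m \<and> set xs \<subseteq> UNIV - {i}}. path_prob P (k # xs @ [i]))"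

lemma path_prob_nonneg:
  assumes "\<forall>i j. P$i$j \<ge> 0" shows "path_prob P xs \<ge> 0"
  by (induction xs rule: induct_list012) (use assms in auto)

lemma Sx_nonneg: assumes "\<forall>i j. P$i$j \<ge> 0" shows "Sx P m k i \<ge> 0"
  unfolding Sx_def by (intro sum_nonneg path_prob_nonneg assms)

lemma Sx_0: "Sx P 0 k i = P$k$i"
proof -
  have "{xs. length xs = 0 \<and> set xs \<subseteq> UNIV - {i}} = {[]}" by auto
  then show ?thesis unfolding Sx_def by simp
qed

lemma Sx_Suc: "Sx P (Suc m) k i = (\<Sum>x\<in>UNIV-{i}. P$k$x * Sx P m x i)"
proof -
  let ?A = "UNIV - {i}"
  have eq: "{xs. length xs = Suc m \<and> set xs \<subseteq> ?A} = (\<lambda>(x, ys). x#ys) ` (?A \<times> {ys. length ys = m \<and> set ys \<subseteq> ?A})"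
    by (auto simp: length_Suc_conv image_def)
  have inj: "inj_on (\<lambda>(x, ys). x#ys) (?A \<times> {ys. length ys = m \<and> set ys \<subseteq> ?A})"
    by (auto simp: inj_on_def)
  have fin: "finite {ys. length ys = m \<and> set ys \<subseteq> ?A}"
    using finite_lists_length_eq[of ?A m] by (simp add: conj_commute)
  have "Sx P (Suc m) k i = (\<Sum>(x,ys)\<in>?A \<times> {ys. length ys = m \<and> set ys \<subseteq> ?A}. path_prob P (k # x # ys @ [i]))"
    unfolding Sx_def eq by (subst sum.reindex[OF inj]) (simp add: case_prod_unfold)
  also have "\<dots> = (\<Sum>x\<in>?A. \<Sum>ys\<in>{ys. length ys = m \<and> set ys \<subseteq> ?A}. path_prob P (k # x # ys @ [i]))"
    by (rule sum.cartesian_product[symmetric])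
  also have "\<dots> = (\<Sum>x\<in>?A. P$k$x * Sx P m x i)"
    unfolding Sx_def by (simp add: sum_distrib_left)
  finally show ?thesis .
qed

lemma Sx_partial_le1:
  assumes nn: "\<forall>i j. P$i$j \<ge> 0" and st: "\<forall>i. (\<Sum>j\<in>UNIV. P$i$j) \<le> 1"
  shows "(\<Sum>m<M. Sx P m k i) \<le> 1"
proof (induction M arbitrary: k)
  case 0 then show ?case by simp
next
  case (Suc M)
  have "(\<Sum>m<Suc M. Sx P m k i) = P$k$i + (\<Sum>m<M. \<Sum>x\<in>UNIV-{i}. P$k$x * Sx P m x i)"
    by (simp add: sum.lessThan_Suc_shift Sx_0 Sx_Suc del: sum.lessThan_Suc)
  also have "\<dots> = P$k$i + (\<Sum>x\<in>UNIV-{i}. P$k$x * (\<Sum>m<M. Sx P m x i))"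
    by (simp add: sum.swap[of _ "{..<M}"] sum_distrib_left)
  also have "\<dots> \<le> P$k$i + (\<Sum>x\<in>UNIV-{i}. P$k$x)"
    by (intro add_left_mono sum_mono mult_left_le) (use nn Suc in auto)
  also have "\<dots> = (\<Sum>x\<in>UNIV. P$k$x)"
    by (simp add: sum.remove[of UNIV i])
  also have "\<dots> \<le> 1" using st by auto
  finally show ?case .
qed

lemma Sx_summable:
  assumes nn: "\<forall>i j. P$i$j \<ge> 0" and st: "\<forall>i. (\<Sum>j\<in>UNIV. P$i$j) \<le> 1"
  shows "summable (\<lambda>m. Sx P m k i)"
  apply (rule bounded_imp_summable[where B=1])
  using Sx_nonneg[OF nn] apply blast
  using Sx_partial_le1[OF nn st, where k=k and i=i] by (metis lessThan_Suc_atMost)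

lemma visit_Sx: "k \<noteq> i \<Longrightarrow> visit_prob P k i = (\<Sum>m. Sx P m k i)"
  unfolding visit_prob_def Sx_def by simp

lemma visit_bounds:
  assumes nn: "\<forall>i j. P$i$j \<ge> 0" and st: "\<forall>i. (\<Sum>j\<in>UNIV. P$i$j) \<le> 1"
  shows "0 \<le> visit_prob P k i \<and> visit_prob P k i \<le> 1"
proof (cases "k = i")
  case True then show ?thesis by (simp add: visit_prob_def)
next
  case False
  show ?thesis unfolding visit_Sx[OF False]
    using Sx_summable[OF nn st] Sx_nonneg[OF nn] Sx_partial_le1[OF nn st]
    by (auto intro!: suminf_nonneg suminf_le_const)
qed

lemma visit_step:
  assumes nn: "\<forall>i j. P$i$j \<ge> 0" and st: "\<forall>i. (\<Sum>j\<in>UNIV. P$i$j) \<le> 1" and ki: "k \<noteq> i"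
  shows "visit_prob P k i = (\<Sum>x\<in>UNIV. P$k$x * visit_prob P x i)"
proof -
  have sm: "\<And>k. summable (\<lambda>m. Sx P m k i)" using Sx_summable[OF nn st] .
  have "visit_prob P k i = (\<Sum>m. Sx P (Suc m) k i) + Sx P 0 k i"
    unfolding visit_Sx[OF ki] using suminf_split_head[OF sm[of k]] by simp
  also have "(\<Sum>m. Sx P (Suc m) k i) = (\<Sum>x\<in>UNIV-{i}. \<Sum>m. P$k$x * Sx P m x i)"
    unfolding Sx_Suc by (rule suminf_sum) (intro summable_mult sm)
  also have "\<dots> = (\<Sum>x\<in>UNIV-{i}. P$k$x * visit_prob P x i)"
    by (intro sum.cong refl) (simp add: suminf_mult[OF sm] visit_Sx)
  finally show ?thesis
    by (simp add: sum.remove[of UNIV i] Sx_0 visit_prob_def)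
qed

lemma unit_int_sum: "(\<Sum>k\<in>S. (unit_int i :: int^'n::finite)$k) = (if i \<in> S then 1 else 0)"
  unfolding unit_int_def by (simp add: sum.delta)

lemma closed_mono:
  fixes S :: "'n::finite set"
  assumes mu_pos: "\<forall>i. mu$i > 0"
    and noexit: "\<forall>i\<in>S. exit_prob P i = 0"
    and closed: "\<forall>i\<in>S. \<forall>j. P$i$j > 0 \<longrightarrow> j \<in> S"
    and st: "(z, w) \<in> (jackson_step lam mu P)\<^sup>*"
  shows "(\<Sum>k\<in>S. z$k) \<le> (\<Sum>k\<in>S. w$k)"
  using st
proof (induction rule: rtrancl_induct)
  case base then show ?case by simp
next
  case (step y w)
  have f_add: "\<And>a b :: int^'n. (\<Sum>k\<in>S. (a+b)$k) = (\<Sum>k\<in>S. a$k) + (\<Sum>k\<in>S. b$k)"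
    by (simp add: sum.distrib)
  have f_sub: "\<And>a b :: int^'n. (\<Sum>k\<in>S. (a-b)$k) = (\<Sum>k\<in>S. a$k) - (\<Sum>k\<in>S. b$k)"
    by (simp add: sum_subtractf)
  from step.hyps(2) obtain i where
    "(w = y + unit_int i \<and> lam$i > 0)
     \<or> (w = y - unit_int i \<and> mu$i * exit_prob P i > 0)
     \<or> (\<exists>j. w = y + unit_int j - unit_int i \<and> mu$i * P$i$j > 0)"
    unfolding jackson_step_def by auto
  then have "(\<Sum>k\<in>S. y$k) \<le> (\<Sum>k\<in>S. w$k)"
  proof (elim disjE exE conjE)
    assume "w = y + unit_int i" then show ?thesis by (simp add: sum.distrib unit_int_sum)
  next
    assume w: "w = y - unit_int i" and "mu$i * exit_prob P i > 0"
    then have "i \<notin> S" using noexit by auto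
    then show ?thesis using w by (simp add: sum_subtractf unit_int_sum)
  next
    fix j assume w: "w = y + unit_int j - unit_int i" and "mu$i * P$i$j > 0"
    then have "P$i$j > 0" using mu_pos by (meson zero_less_mult_pos)
    then have "i \<in> S \<longrightarrow> j \<in> S" using closed by auto
    then show ?thesis using w by (simp add: sum.distrib sum_subtractf unit_int_sum)
  qed
  then show ?case using step.IH by linarith
qed

lemma ker_zero:
  fixes P :: "real^'n::finite^'n"
  assumes mu_pos: "\<forall>i. mu$i > 0"
    and P_nonneg: "\<forall>i j. P$i$j \<ge> 0"
    and P_substoch: "\<forall>i. (\<Sum>j\<in>UNIV. P$i$j) \<le> 1"
    and hypA: "kernel_irreducible lam mu P"
    and fixy: "\<forall>k. y$k = (\<Sum>j\<in>UNIV. P$k$j * y$j)"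
  shows "\<forall>k. y$k \<le> 0"
proof (rule ccontr)
  assume "\<not> (\<forall>k. y$k \<le> 0)"
  then obtain k1 where k1: "y$k1 > 0" by (meson not_le)
  define M where "M = Max (range (\<lambda>k. y$k))"
  have yM: "\<And>k. y$k \<le> M" unfolding M_def by (rule Max_ge) auto
  have Mpos: "M > 0" using yM[of k1] k1 by linarith
  have "M \<in> range (\<lambda>k. y$k)" unfolding M_def by (rule Max_in) auto
  then obtain k0 where k0: "y$k0 = M" by auto
  define S where "S = {k. y$k = M}"
  have key: "exit_prob P k = 0 \<and> (\<forall>j. P$k$j > 0 \<longrightarrow> j \<in> S)" if kS: "k \<in> S" for k
  proof -
    have "y$k = M" using kS unfolding S_def by simp
    then have e1: "M = (\<Sum>j\<in>UNIV. P$k$j * y$j)" using fixy by metis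
    have le1: "(\<Sum>j\<in>UNIV. P$k$j * y$j) \<le> (\<Sum>j\<in>UNIV. P$k$j * M)"
      by (intro sum_mono mult_left_mono yM) (simp add: P_nonneg)
    have "(\<Sum>j\<in>UNIV. P$k$j) * M \<le> 1 * M"
      using P_substoch Mpos by (intro mult_right_mono) auto
    then have le2: "(\<Sum>j\<in>UNIV. P$k$j * M) \<le> M"
      by (simp add: sum_distrib_right)
    have "(\<Sum>j\<in>UNIV. P$k$j) * M = M"
      using e1 le1 le2 by (simp add: sum_distrib_right)
    then have s1: "(\<Sum>j\<in>UNIV. P$k$j) = 1" using Mpos by simp
    have "(\<Sum>j\<in>UNIV. P$k$j * (M - y$j)) = 0"
      using e1 le1 le2 by (simp add: right_diff_distrib sum_subtractf)
    then have z: "\<forall>j. P$k$j * (M - y$j) = 0"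
      by (subst (asm) sum_nonneg_eq_0_iff) (use yM P_nonneg in auto)
    have "exit_prob P k = 0" unfolding exit_prob_def using s1 by simp
    moreover have "\<forall>j. P$k$j > 0 \<longrightarrow> j \<in> S"
    proof (intro allI impI)
      fix j assume "P$k$j > 0"
      then have "M - y$j = 0" using z[rule_format, of j] by simp
      then show "j \<in> S" unfolding S_def by simp
    qed
    ultimately show ?thesis by blast
  qed
  have "(\<Sum>k\<in>S. (unit_int k0 :: int^'n)$k) \<le> (\<Sum>k\<in>S. (0::int^'n)$k)"
  proof (rule closed_mono[OF mu_pos])
    show "(unit_int k0, 0) \<in> (jackson_step lam mu P)\<^sup>*"
      using hypA unfolding kernel_irreducible_def by blast
    show "\<forall>i\<in>S. exit_prob P i = 0" using key by blast
    show "\<forall>i\<in>S. \<forall>j. P$i$j > 0 \<longrightarrow> j \<in> S" using key by blast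
  qed
  moreover have "k0 \<in> S" using k0 S_def by auto
  moreover have "(\<Sum>k\<in>S. (0::int^'n)$k) = 0" by simp
  ultimately show False using unit_int_sum[of k0 S] by simp
qed

lemma invertible_IP:
  fixes P :: "real^'n::finite^'n"
  assumes mu_pos: "\<forall>i. mu$i > 0"
    and P_nonneg: "\<forall>i j. P$i$j \<ge> 0"
    and P_substoch: "\<forall>i. (\<Sum>j\<in>UNIV. P$i$j) \<le> 1"
    and hypA: "kernel_irreducible lam mu P"
  shows "invertible (mat 1 - P)"
proof -
  have "\<forall>x. (mat 1 - P) *v x = 0 \<longrightarrow> x = 0"
  proof (intro allI impI)
    fix x :: "real^'n" assume "(mat 1 - P) *v x = 0"
    then have "mat 1 *v x - P *v x = 0" by (simp only: matrix_vector_mult_diff_rdistrib)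
    then have xe: "x = P *v x" by (simp add: matrix_vector_mul_lid)
    have fx: "\<forall>k. x$k = (\<Sum>j\<in>UNIV. P$k$j * x$j)"
    proof
      fix k show "x$k = (\<Sum>j\<in>UNIV. P$k$j * x$j)"
        by (subst xe) (simp add: matrix_vector_mult_def)
    qed
    have fnx: "\<forall>k. (-x)$k = (\<Sum>j\<in>UNIV. P$k$j * (-x)$j)"
    proof
      fix k
      have "(\<Sum>j\<in>UNIV. P$k$j * (-x)$j) = -(\<Sum>j\<in>UNIV. P$k$j * x$j)" by (simp add: sum_negf)
      also have "\<dots> = - x$k" using fx by metis
      finally show "(-x)$k = (\<Sum>j\<in>UNIV. P$k$j * (-x)$j)" by simp
    qed
    have "\<forall>k. x$k \<le> 0" by (rule ker_zero[OF mu_pos P_nonneg P_substoch hypA fx])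
    moreover have "\<forall>k. (-x)$k \<le> 0" by (rule ker_zero[OF mu_pos P_nonneg P_substoch hypA fnx])
    ultimately show "x = 0" by (simp add: vec_eq_iff order_antisym)
  qed
  then show ?thesis unfolding invertible_left_inverse matrix_left_invertible_ker .
qed

lemma green_inv:
  fixes P :: "real^'n::finite^'n"
  assumes "invertible (mat 1 - P)"
  shows "green P ** (mat 1 - P) = mat 1" "(mat 1 - P) ** green P = mat 1"
proof -
  have "\<exists>A'. (mat 1 - P) ** A' = mat 1 \<and> A' ** (mat 1 - P) = mat 1"
    using assms unfolding invertible_def .
  then have "(mat 1 - P) ** green P = mat 1 \<and> green P ** (mat 1 - P) = mat 1"
    unfolding green_def matrix_inv_def by (rule someI_ex)
  then show "green P ** (mat 1 - P) = mat 1" "(mat 1 - P) ** green P = mat 1" by auto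
qed

lemma green_row:
  fixes P :: "real^'n::finite^'n"
  assumes "green P ** (mat 1 - P) = mat 1"
  shows "green P $k$i = (if k = i then 1 else 0) + (\<Sum>m\<in>UNIV. green P $k$m * P$m$i)"
proof -
  have "(green P ** (mat 1 - P))$k$i = (mat 1 :: real^'n^'n)$k$i" using assms by simp
  then have "(\<Sum>m\<in>UNIV. green P $k$m * ((if m = i then 1 else 0) - P$m$i)) = (if k = i then 1 else 0)"
    by (simp add: matrix_matrix_mult_def mat_def)
  moreover have "(\<Sum>m\<in>UNIV. green P $k$m * ((if m = i then 1 else 0) - P$m$i))
     = (\<Sum>m\<in>UNIV. green P $k$m * (if m = i then 1 else 0)) - (\<Sum>m\<in>UNIV. green P $k$m * P$m$i)"
    by (simp add: right_diff_distrib sum_subtractf)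
  moreover have "(\<Sum>m\<in>UNIV. green P $k$m * (if m = i then 1 else 0)) = green P $k$i"
    by (simp add: mult.commute[of _ "if _ then _ else _"] if_distrib[of "\<lambda>x. x * _"] cong: if_cong)
  ultimately show ?thesis by linarith
qed

lemma green_col:
  fixes P :: "real^'n::finite^'n"
  assumes "(mat 1 - P) ** green P = mat 1"
  shows "(\<Sum>l\<in>UNIV. (\<rho>$l - (\<Sum>j\<in>UNIV. \<rho>$j * P$j$l)) * green P $l$i) = \<rho>$i"
proof -
  have "(\<rho> v* (mat 1 - P)) v* green P = \<rho>"
    by (simp add: vector_matrix_mul_assoc assms)
  then have "((\<rho> v* (mat 1 - P)) v* green P)$i = \<rho>$i" by simp
  moreover have "(\<rho> v* (mat 1 - P))$l = \<rho>$l - (\<Sum>j\<in>UNIV. \<rho>$j * P$j$l)" for l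
  proof -
    have "(\<rho> v* (mat 1 - P))$l = (\<Sum>j\<in>UNIV. \<rho>$j * ((if j = l then 1 else 0) - P$j$l))"
      by (simp add: vector_matrix_mult_def mat_def)
    also have "\<dots> = (\<Sum>j\<in>UNIV. \<rho>$j * (if j = l then 1 else 0)) - (\<Sum>j\<in>UNIV. \<rho>$j * P$j$l)"
      by (simp add: right_diff_distrib sum_subtractf)
    also have "(\<Sum>j\<in>UNIV. \<rho>$j * (if j = l then 1 else 0)) = \<rho>$l"
      by (simp add: mult.commute[of _ "if _ then _ else _"] if_distrib[of "\<lambda>x. x * _"] cong: if_cong)
    finally show ?thesis .
  qed
  ultimately show ?thesis by (simp add: vector_matrix_mult_def)
qed

lemma QG:
  fixes P :: "real^'n::finite^'n"
  assumes nn: "\<forall>i j. P$i$j \<ge> 0" and st: "\<forall>i. (\<Sum>j\<in>UNIV. P$i$j) \<le> 1"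
    and GL: "green P ** (mat 1 - P) = mat 1"
  shows "green P $i$i > 0 \<and> (\<forall>k. visit_prob P k i * green P $i$i = green P $k$i)"
proof -
  define G where "G = green P"
  define q where "q = (\<chi> k. visit_prob P k i)"
  define r where "r = (\<Sum>m\<in>UNIV. P$i$m * visit_prob P m i)"
  have Pq: "(P *v q)$k = (\<Sum>m\<in>UNIV. P$k$m * visit_prob P m i)" for k
    by (simp add: matrix_vector_mult_def q_def)
  have Aq: "(mat 1 - P) *v q = (\<chi> k. if k = i then 1 - r else 0)"
  proof -
    have "(mat 1 - P) *v q = q - P *v q" by (simp add: matrix_vector_mult_diff_rdistrib)
    also have "\<dots> = (\<chi> k. if k = i then 1 - r else 0)"
    proof (subst vec_eq_iff, intro allI)
      fix k
      show "(q - P *v q)$k = (\<chi> k. if k = i then 1 - r else 0)$k"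
      proof (cases "k = i")
        case True
        have "q$i = 1" by (simp add: q_def visit_prob_def)
        then show ?thesis using True by (simp add: Pq r_def)
      next
        case False
        then show ?thesis using visit_step[OF nn st False] by (simp add: Pq, simp add: q_def)
      qed
    qed
    finally show ?thesis .
  qed
  have "q = G *v ((mat 1 - P) *v q)"
    by (simp add: matrix_vector_mul_assoc GL G_def)
  then have qk: "visit_prob P k i = G$k$i * (1 - r)" for k
  proof -
    assume h: "q = G *v ((mat 1 - P) *v q)"
    have "visit_prob P k i = q$k" by (simp add: q_def)
    also have "\<dots> = (\<Sum>m\<in>UNIV. G$k$m * (if m = i then 1 - r else 0))"
      by (subst h, subst Aq) (simp add: matrix_vector_mult_def)
    also have "\<dots> = G$k$i * (1 - r)"
      by (simp add: if_distrib[of "\<lambda>x. _ * x"] cong: if_cong)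
    finally show ?thesis .
  qed
  have "r \<le> (\<Sum>m\<in>UNIV. P$i$m)"
    unfolding r_def using visit_bounds[OF nn st] nn
    by (intro sum_mono) (simp add: mult_left_le)
  then have r1: "r \<le> 1" using st by (meson order_trans)
  have "1 = G$i$i * (1 - r)" using qk[of i] by (simp add: visit_prob_def)
  then have "1 - r \<noteq> 0" by auto
  then have rpos: "1 - r > 0" using r1 by simp
  then have Gpos: "G$i$i > 0" using \<open>1 = G$i$i * (1 - r)\<close>
    by (metis zero_less_mult_pos2 zero_less_one)
  have "visit_prob P k i * G$i$i = G$k$i" for k
  proof -
    have "visit_prob P k i * G$i$i = G$k$i * (G$i$i * (1 - r))" unfolding qk[of k] by (simp only: mult.assoc mult.commute mult.left_commute)
    also have "\<dots> = G$k$i" using \<open>1 = G$i$i * (1 - r)\<close> by simp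
    finally show ?thesis .
  qed
  then show ?thesis using Gpos unfolding G_def by blast
qed

lemma term_le: "0 \<le> (x::real) \<Longrightarrow> x \<le> y \<Longrightarrow> 0 \<le> w \<Longrightarrow> ln (1 + x) * w \<le> ln (1 + y) * w"
  by (intro mult_right_mono) auto

lemma term_lt: "0 \<le> (x::real) \<Longrightarrow> x < y \<Longrightarrow> 0 < w \<Longrightarrow> ln (1 + x) * w < ln (1 + y) * w"
  by (intro mult_strict_right_mono) auto

lemma term_nn: "0 \<le> (x::real) \<Longrightarrow> 0 \<le> w \<Longrightarrow> 0 \<le> ln (1 + x) * w"
  by (intro mult_nonneg_nonneg) auto

lemma term_pos: "0 < (x::real) \<Longrightarrow> 0 < w \<Longrightarrow> 0 < ln (1 + x) * w"
  by (intro mult_pos_pos) auto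

theorem proposition3p1:
  fixes lam mu \<nu> \<rho> :: "real^'n::finite" and P :: "real^'n^'n" and \<epsilon> :: real
  assumes lam_nonneg: "\<forall>i. lam$i \<ge> 0"
    and mu_pos: "\<forall>i. mu$i > 0"
    and P_nonneg: "\<forall>i j. P$i$j \<ge> 0"
    and P_diag: "\<forall>i. P$i$i = 0"
    and P_substoch: "\<forall>i. (\<Sum>j\<in>UNIV. P$i$j) \<le> 1"
    and hypA: "kernel_irreducible lam mu P"
    and traffic: "\<forall>j. \<nu>$j = lam$j + (\<Sum>i\<in>UNIV. \<nu>$i * P$i$j)"
    and hypB: "\<forall>i. \<nu>$i < mu$i"
    and branching: "\<forall>i. card {j. P$j$i > 0} \<le> 1"
    and eps_pos: "\<epsilon> > 0"
    and rho: "\<forall>i. (\<Sum>j\<in>UNIV. \<rho>$j * P$j$i) < \<rho>$i"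
  shows "(\<chi> i. \<epsilon> * green P $i$i / \<rho>$i) \<in> Gamma_set P"
proof -
  have inv: "invertible (mat 1 - P)" by (rule invertible_IP[OF mu_pos P_nonneg P_substoch hypA])
  note GL = green_inv(1)[OF inv] and GR = green_inv(2)[OF inv]
  define G where "G = green P"
  have Gdiag: "\<And>i. G$i$i > 0" and QGe: "\<And>k i. visit_prob P k i * G$i$i = G$k$i"
    using QG[OF P_nonneg P_substoch GL] unfolding G_def by auto
  have Gnn: "G$k$i \<ge> 0" for k i
  proof -
    have "visit_prob P k i \<ge> 0" using visit_bounds[OF P_nonneg P_substoch] by blast
    then have "visit_prob P k i * G$i$i \<ge> 0" using Gdiag[of i] by simp
    then show ?thesis using QGe[of k i] by simp
  qed
  have Grow: "G$k$i = (if k = i then 1 else 0) + (\<Sum>m\<in>UNIV. G$k$m * P$m$i)" for k i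
    unfolding G_def by (rule green_row[OF GL])
  have rhopos: "\<rho>$i > 0" for i
  proof -
    have cpos: "\<rho>$l - (\<Sum>j\<in>UNIV. \<rho>$j * P$j$l) > 0" for l using rho by auto
    have "(\<rho>$i - (\<Sum>j\<in>UNIV. \<rho>$j * P$j$i)) * G$i$i
        \<le> (\<Sum>l\<in>UNIV. (\<rho>$l - (\<Sum>j\<in>UNIV. \<rho>$j * P$j$l)) * G$l$i)"
      by (rule member_le_sum[where f = "\<lambda>l. (\<rho>$l - (\<Sum>j\<in>UNIV. \<rho>$j * P$j$l)) * G$l$i"])
         (auto intro!: mult_nonneg_nonneg Gnn less_imp_le[OF cpos])
    also have "\<dots> = \<rho>$i" unfolding G_def by (rule green_col[OF GR])
    finally show ?thesis using mult_pos_pos[OF cpos[of i] Gdiag[of i]] by linarith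
  qed
  define \<gamma> where "\<gamma> = (\<chi> i. \<epsilon> * G$i$i / \<rho>$i)"
  have gpos: "\<gamma>$i > 0" for i
    unfolding \<gamma>_def using eps_pos Gdiag[of i] rhopos[of i] by simp
  have Qg: "visit_prob P k j * \<gamma>$j = \<epsilon> * G$k$j / \<rho>$j" for k j
  proof -
    have "visit_prob P k j * \<gamma>$j = \<epsilon> * (visit_prob P k j * G$j$j) / \<rho>$j"
      unfolding \<gamma>_def by simp
    then show ?thesis using QGe[of k j] by simp
  qed
  have arrow: "gamma_arrow P \<gamma> j \<bullet> v = (\<Sum>k\<in>UNIV. ln (1 + \<epsilon> * G$k$j / \<rho>$j) * v$k)" for j v
    unfolding inner_vec_def gamma_arrow_def by (simp add: Qg)
  have xnn: "0 \<le> \<epsilon> * G$k$j / \<rho>$j" for k j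
    using eps_pos Gnn[of k j] rhopos[of j] by simp
  have "\<gamma> \<in> Gamma_set P"
    unfolding Gamma_set_def mem_Collect_eq
  proof (intro conjI allI impI)
    fix i show "0 \<le> \<gamma>$i" using gpos[of i] by simp
  next
    fix i and v :: "real^'n"
    assume vnn: "\<forall>k. 0 \<le> v$k" and vnz: "v \<noteq> 0" and vi: "v$i = 0"
    define f where "f j = gamma_arrow P \<gamma> j \<bullet> v" for j
    have fT: "f j = (\<Sum>k\<in>UNIV. ln (1 + \<epsilon> * G$k$j / \<rho>$j) * v$k)" for j
      unfolding f_def by (rule arrow)
    have "\<exists>j. f i < f j"
    proof (cases "\<forall>k. v$k > 0 \<longrightarrow> G$k$i = 0")
      case True
      have fi0: "f i = 0" unfolding fT
      proof (rule sum.neutral, intro ballI)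
        fix k
        show "ln (1 + \<epsilon> * G$k$i / \<rho>$i) * v$k = 0"
        proof (cases "v$k > 0")
          case True then show ?thesis using \<open>\<forall>k. v$k > 0 \<longrightarrow> G$k$i = 0\<close> by simp
        next
          case False then have "v$k = 0" using vnn[rule_format, of k] by simp
          then show ?thesis by simp
        qed
      qed
      obtain k where "v$k \<noteq> 0" using vnz by (metis vec_eq_iff zero_index)
      then have vk: "v$k > 0" using vnn[rule_format, of k] by simp
      have "0 < ln (1 + \<epsilon> * G$k$k / \<rho>$k) * v$k"
        by (rule term_pos[OF _ vk]) (use eps_pos Gdiag[of k] rhopos[of k] in simp)
      also have "\<dots> \<le> f k" unfolding fT
        by (rule member_le_sum[where f = "\<lambda>m. ln (1 + \<epsilon> * G$m$k / \<rho>$k) * v$m"])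
           (auto intro!: term_nn xnn simp: vnn)
      finally show ?thesis using fi0 by auto
    next
      case False
      then obtain k0 where vk0: "v$k0 > 0" and Gk0: "G$k0$i \<noteq> 0" by blast
      have Gk0p: "G$k0$i > 0" using Gk0 Gnn[of k0 i] by simp
      have k0i: "k0 \<noteq> i" using vk0 vi by auto
      obtain a where Pa: "P$a$i > 0"
      proof (rule ccontr)
        assume "\<not> thesis"
        then have "\<forall>m. P$m$i = 0" using that P_nonneg by (metis order_le_less)
        then have "G$k0$i = 0" using Grow[of k0 i] k0i by simp
        then show False using Gk0 by simp
      qed
      have uniq: "P$m$i > 0 \<Longrightarrow> m = a" for m
      proof -
        assume "P$m$i > 0"
        have "card {j. P$j$i > 0} \<le> Suc 0" using branching by simp
        then have "\<forall>x\<in>{j. P$j$i > 0}. \<forall>y\<in>{j. P$j$i > 0}. x = y"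
          by (subst (asm) card_le_Suc0_iff_eq) auto
        then show "m = a" using Pa \<open>P$m$i > 0\<close> by blast
      qed
      have Pm0: "m \<noteq> a \<Longrightarrow> P$m$i = 0" for m
        using uniq[of m] P_nonneg by (metis order_le_less)
      have sumeq: "(\<Sum>m\<in>UNIV. w m * P$m$i) = w a * P$a$i" for w :: "'n \<Rightarrow> real"
      proof -
        have "(\<Sum>m\<in>UNIV. w m * P$m$i) = (\<Sum>m\<in>UNIV. if m = a then w a * P$a$i else 0)"
          by (rule sum.cong) (auto simp: Pm0)
        then show ?thesis by simp
      qed
      have Gki: "k \<noteq> i \<Longrightarrow> G$k$i = G$k$a * P$a$i" for k
        using Grow[of k i] sumeq[of "\<lambda>m. G$k$m"] by simp
      have rai: "\<rho>$a * P$a$i < \<rho>$i"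
        using rho sumeq[of "\<lambda>m. \<rho>$m"] by metis
      have ai: "P$a$i / \<rho>$i < 1 / \<rho>$a"
        using rai rhopos[of a] rhopos[of i] by (simp add: field_simps)
      have cmp: "\<epsilon> * G$k$i / \<rho>$i = \<epsilon> * (G$k$a * (P$a$i / \<rho>$i))" if "k \<noteq> i" for k
        using Gki[OF that] by simp
      have cmp2: "\<epsilon> * G$k$a / \<rho>$a = \<epsilon> * (G$k$a * (1 / \<rho>$a))" for k
        by simp
      have le: "ln (1 + \<epsilon> * G$k$i / \<rho>$i) * v$k \<le> ln (1 + \<epsilon> * G$k$a / \<rho>$a) * v$k" for k
      proof (cases "k = i")
        case True then show ?thesis using vi by simp
      next
        case False
        have "G$k$a * (P$a$i / \<rho>$i) \<le> G$k$a * (1 / \<rho>$a)"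
          by (rule mult_left_mono[OF less_imp_le[OF ai] Gnn])
        then have "\<epsilon> * (G$k$a * (P$a$i / \<rho>$i)) \<le> \<epsilon> * (G$k$a * (1 / \<rho>$a))"
          by (rule mult_left_mono[OF _ less_imp_le[OF eps_pos]])
        then show ?thesis unfolding cmp[OF False] cmp2
          by (intro term_le) (use xnn[of k i] cmp[OF False] vnn in auto)
      qed
      have Gk0a: "G$k0$a > 0" using Gk0p Gki[OF k0i] Gnn[of k0 a] Pa
        by (metis mult_zero_left order_le_less)
      have lt: "ln (1 + \<epsilon> * G$k0$i / \<rho>$i) * v$k0 < ln (1 + \<epsilon> * G$k0$a / \<rho>$a) * v$k0"
      proof -
        have "G$k0$a * (P$a$i / \<rho>$i) < G$k0$a * (1 / \<rho>$a)"
          by (rule mult_strict_left_mono[OF ai Gk0a])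
        then have "\<epsilon> * (G$k0$a * (P$a$i / \<rho>$i)) < \<epsilon> * (G$k0$a * (1 / \<rho>$a))"
          by (rule mult_strict_left_mono[OF _ eps_pos])
        then show ?thesis unfolding cmp[OF k0i] cmp2
          by (intro term_lt[OF _ _ vk0]) (use xnn[of k0 i] cmp[OF k0i] in auto)
      qed
      have "f i < f a" unfolding fT
        by (rule sum_strict_mono_ex1) (use le lt in auto)
      then show ?thesis by blast
    qed
    then have "f i < Max (range f)"
      by (subst Max_gr_iff) auto
    then show "gamma_arrow P \<gamma> i \<bullet> v < (MAX j. gamma_arrow P \<gamma> j \<bullet> v)"
      unfolding f_def by simp
  qed
  then show ?thesis unfolding \<gamma>_def G_def .
qed

end
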